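(* Let $d\ge1$, $T\ge2$, $p\ge2$, and let $\{X_j\}_{j\ge1}\subset\mathbb R^d$ be a martingale difference sequence with respect to $\{\mathcal F_j\}_{j\ge0}$ with finite conditional covariances and $\sup_j\|X_j\|_\infty\le\varkappa$ a.s. Then $$\Big(\mathsf E\Big\|\sum_{j=1}^TX_j\Big\|_\infty^p\Big)^{1/p}\le4p\log(2dT^2)\Bigg(\varkappa+\Big(\sum_{j=1}^T\big(\mathsf E\|X_j\|_\infty^p\big)^{2/p}\Big)^{1/2}\Bigg).$$
   Context: $\|\cdot\|_\infty$ is the max-norm on $\mathbb R^d$. A martingale difference sequence means $X_j$ is $\mathcal F_j$-measurable, integrable, and $\mathsf E[X_j\mid\mathcal F_{j-1}]=0$. *)

theory Defs
  imports "HOL-Analysis.Analysis" "HOL-Probability.Probability"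
begin

text \<open>Max-norm on R^d, with R^d rendered as real^'d for a finite index type 'd (d = CARD('d)).\<close>
definition maxnorm :: "real ^ 'd \<Rightarrow> real" where
  "maxnorm x = (MAX i. \<bar>x $ i\<bar>)"

definition martingale_difference_seq ::
  "'a measure \<Rightarrow> (nat \<Rightarrow> 'a measure) \<Rightarrow> (nat \<Rightarrow> 'a \<Rightarrow> real ^ 'd) \<Rightarrow> bool" where
  "martingale_difference_seq M F X \<longleftrightarrow>
     (\<forall>j. subalgebra M (F j)) \<and> filtration (space M) F \<and>
     (\<forall>j\<ge>1. \<forall>i.
        (\<lambda>\<omega>. X j \<omega> $ i) \<in> borel_measurable (F j) \<and>
        integrable M (\<lambda>\<omega>. X j \<omega> $ i) \<and>
        (AE \<omega> in M. real_cond_exp M (F (j - 1)) (\<lambda>\<omega>. X j \<omega> $ i) \<omega> = 0))"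

end

theory Submission
  imports Defs
begin

lemma exp_quad_le:
  fixes y :: real assumes "\<bar>y\<bar> \<le> 1/2"
  shows "exp (y - 2 * y\<^sup>2) \<le> 1 + y"
proof -
  have "y - 2 * y\<^sup>2 \<le> ln (1 + y)"
  proof (cases "y \<ge> 0")
    case True
    then have "\<bar>ln (1 + y) - y\<bar> \<le> y\<^sup>2" using assms by (intro abs_ln_one_plus_x_minus_x_bound_nonneg) auto
    then show ?thesis using True by (smt (verit) zero_le_power2)
  next
    case False
    then have "\<bar>ln (1 + y) - y\<bar> \<le> 2 * y\<^sup>2" using assms by (intro abs_ln_one_plus_x_minus_x_bound_nonpos) auto
    then show ?thesis by linarith
  qed
  then have "exp (y - 2 * y\<^sup>2) \<le> exp (ln (1 + y))" by simp
  also have "\<dots> = 1 + y" using assms by simp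
  finally show ?thesis .
qed

lemma powr_add_le:
  fixes a b p :: real assumes "a \<ge> 0" "b \<ge> 0" "p \<ge> 1"
  shows "a powr p + b powr p \<le> (a + b) powr p"
proof (cases "a + b = 0")
  case True then have "a = 0" "b = 0" using assms by auto
  then show ?thesis using assms by simp
next
  case False
  then have s: "a + b > 0" using assms by simp
  have "(a/(a+b)) powr p \<le> (a/(a+b)) powr 1"
    using assms s by (intro powr_mono') (auto simp: field_simps)
  moreover have "(b/(a+b)) powr p \<le> (b/(a+b)) powr 1"
    using assms s by (intro powr_mono') (auto simp: field_simps)
  ultimately have "(a/(a+b)) powr p + (b/(a+b)) powr p \<le> 1"
  proof -
    have "a/(a+b) + b/(a+b) = 1" using s by (simp add: add_divide_distrib[symmetric])
    then show "(a/(a+b)) powr p \<le> (a/(a+b)) powr 1 \<Longrightarrow> (b/(a+b)) powr p \<le> (b/(a+b)) powr 1 \<Longrightarrow> ?thesis"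
      using s assms by simp
  qed
  then have "(a powr p + b powr p) / (a+b) powr p \<le> 1"
    using assms s by (simp add: powr_divide add_divide_distrib)
  then show ?thesis using s by (simp add: divide_le_eq)
qed

lemma powr_convex0:
  fixes r :: real assumes "r \<ge> 1"
  shows "convex_on {0..} (\<lambda>x::real. x powr r)"
proof (rule convex_onI)
  show "convex {0::real..}" by simp
  fix t x y :: real assume t: "0 < t" "t < 1" and xy: "x \<in> {0..}" "y \<in> {0..}"
  show "((1 - t) *\<^sub>R x + t *\<^sub>R y) powr r \<le> (1 - t) * x powr r + t * y powr r"
  proof (cases "x = 0 \<or> y = 0")
    case False
    then have "x \<in> {0<..}" "y \<in> {0<..}" using xy by auto
    then show ?thesis using convex_onD[OF powr_convex[OF assms], of t x y] t by auto
  next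
    case True
    have le: "v powr r \<le> v" if "0 \<le> v" "v \<le> 1" for v :: real
      using powr_mono'[of 1 r v] that assms by (cases "v = 0") auto
    show ?thesis
    proof (cases "x = 0")
      case True
      have "(t * y) powr r = t powr r * y powr r" using t xy by (simp add: powr_mult)
      also have "\<dots> \<le> t * y powr r" using le[of t] t by (intro mult_right_mono) auto
      finally show ?thesis using True by simp
    next
      case False
      then have y0: "y = 0" using True by auto
      have "((1-t) * x) powr r = (1-t) powr r * x powr r" using t xy by (simp add: powr_mult)
      also have "\<dots> \<le> (1-t) * x powr r" using le[of "1-t"] t by (intro mult_right_mono) auto
      finally show ?thesis using y0 by simp
    qed
  qed
qed

lemma jensen_pw:
  fixes Y w :: "nat \<Rightarrow> real" and r :: real
  assumes J: "finite J" "J \<noteq> {}" and r: "r \<ge> 1"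
    and w: "\<And>j. j \<in> J \<Longrightarrow> w j > 0" "sum w J = 1"
    and Y: "\<And>j. j \<in> J \<Longrightarrow> Y j \<ge> 0"
  shows "(\<Sum>j\<in>J. Y j) powr r \<le> (\<Sum>j\<in>J. w j * (Y j / w j) powr r)"
proof -
  have "(\<Sum>j\<in>J. Y j) = (\<Sum>j\<in>J. w j *\<^sub>R (Y j / w j))"
  proof (intro sum.cong refl)
    fix j assume "j \<in> J"
    then have "w j \<noteq> 0" using w(1) by (metis less_irrefl)
    then show "Y j = w j *\<^sub>R (Y j / w j)" by simp
  qed
  moreover have "(\<Sum>j\<in>J. w j *\<^sub>R (Y j / w j)) powr r \<le> (\<Sum>j\<in>J. w j * (Y j / w j) powr r)"
    using w Y by (intro convex_on_sum[OF J powr_convex0[OF r]]) (auto intro: less_imp_le divide_nonneg_pos)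
  ultimately show ?thesis by simp
qed

lemma minkowski_sum:
  fixes Y :: "nat \<Rightarrow> 'a \<Rightarrow> real" and r :: real
  assumes J: "finite J" and r: "r \<ge> 1"
    and Y: "\<And>j x. j \<in> J \<Longrightarrow> Y j x \<ge> 0"
    and intY: "\<And>j. j \<in> J \<Longrightarrow> integrable M (\<lambda>x. Y j x powr r)"
    and intS: "integrable M (\<lambda>x. (\<Sum>j\<in>J. Y j x) powr r)"
  shows "integral\<^sup>L M (\<lambda>x. (\<Sum>j\<in>J. Y j x) powr r)
      \<le> (\<Sum>j\<in>J. (integral\<^sup>L M (\<lambda>x. Y j x powr r)) powr (1/r)) powr r"
proof (cases "J = {}")
  case True then show ?thesis by simp
next
  case Jne: False
  define c where "c j = (integral\<^sup>L M (\<lambda>x. Y j x powr r)) powr (1/r)" for j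
  define C where "C = (\<Sum>j\<in>J. c j)"
  define E where "E = integral\<^sup>L M (\<lambda>x. (\<Sum>j\<in>J. Y j x) powr r)"
  have c0: "c j \<ge> 0" for j unfolding c_def by simp
  have C0: "C \<ge> 0" unfolding C_def using c0 by (simp add: sum_nonneg)
  have E0: "E \<ge> 0" unfolding E_def by (intro integral_nonneg_AE) auto
  have cr: "c j powr r = integral\<^sup>L M (\<lambda>x. Y j x powr r)" for j
  proof -
    have "integral\<^sup>L M (\<lambda>x. Y j x powr r) \<ge> 0" by (intro integral_nonneg_AE) auto
    then show ?thesis unfolding c_def using r by (simp add: powr_powr)
  qed
  have key: "E \<le> (C + e) powr r" if e: "e > 0" for e
  proof -
    define n where "n = real (card J)"
    have n: "n > 0" unfolding n_def using J Jne by (simp add: card_gt_0_iff)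
    define d where "d = e / n"
    have d: "d > 0" unfolding d_def using e n by simp
    define C' where "C' = C + e"
    have C'pos: "C' > 0" unfolding C'_def using C0 e by simp
    have sumcd: "(\<Sum>j\<in>J. c j + d) = C'"
      unfolding C'_def C_def d_def n_def using n by (simp add: sum.distrib n_def)
    define w where "w j = (c j + d) / C'" for j
    have wpos: "w j > 0" for j unfolding w_def using c0 d C'pos by (simp add: add_nonneg_pos)
    have wsum: "sum w J = 1" unfolding w_def using sumcd C'pos by (simp add: sum_divide_distrib[symmetric])
    have pw: "(\<Sum>j\<in>J. Y j x) powr r \<le> (\<Sum>j\<in>J. w j * (Y j x / w j) powr r)" for x
      using jensen_pw[OF J Jne r, of w "\<lambda>j. Y j x"] wpos wsum Y by auto
    have eq: "w j * (Y j x / w j) powr r = (w j powr (1 - r)) * Y j x powr r" if "j \<in> J" for j x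
    proof -
      have "w j * (Y j x / w j) powr r = w j * (Y j x powr r / w j powr r)"
        using Y[OF that] wpos[of j] by (simp add: powr_divide)
      also have "\<dots> = (w j powr (1 - r)) * Y j x powr r"
        using wpos[of j] by (simp add: powr_diff)
      finally show ?thesis .
    qed
    have "E \<le> integral\<^sup>L M (\<lambda>x. \<Sum>j\<in>J. (w j powr (1 - r)) * Y j x powr r)"
      unfolding E_def using intS intY pw eq
      by (intro integral_mono) (auto intro!: sum_mono)
    also have "\<dots> = (\<Sum>j\<in>J. (w j powr (1 - r)) * integral\<^sup>L M (\<lambda>x. Y j x powr r))"
      using intY by (simp add: integral_sum)
    also have "\<dots> = (\<Sum>j\<in>J. (w j powr (1 - r)) * c j powr r)"
      by (simp add: cr)
    also have "\<dots> \<le> (\<Sum>j\<in>J. (w j powr (1 - r)) * (c j + d) powr r)"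
      using c0 d r by (intro sum_mono mult_left_mono powr_mono2) auto
    also have "\<dots> = (\<Sum>j\<in>J. w j * C' powr r)"
    proof (intro sum.cong refl)
      fix j assume "j \<in> J"
      have "c j + d = w j * C'" unfolding w_def using C'pos by simp
      then have "(c j + d) powr r = w j powr r * C' powr r"
        using wpos[of j] C'pos by (simp add: powr_mult)
      then show "(w j powr (1 - r)) * (c j + d) powr r = w j * C' powr r"
        using wpos[of j] by (simp add: powr_diff field_simps)
    qed
    also have "\<dots> = C' powr r" using wsum by (simp add: sum_distrib_right[symmetric])
    finally show ?thesis unfolding C'_def .
  qed
  show ?thesis
  proof (rule ccontr)
    assume "\<not> ?thesis"
    then have lt: "C powr r < E" unfolding E_def C_def c_def by simp
    have Er: "E powr (1/r) > C"
    proof (rule ccontr)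
      assume "\<not> ?thesis"
      then have "E powr (1/r) \<le> C" by simp
      then have "(E powr (1/r)) powr r \<le> C powr r" using r E0 by (intro powr_mono2) auto
      then show False using lt E0 r by (simp add: powr_powr)
    qed
    define e where "e = (E powr (1/r) - C) / 2"
    have e: "e > 0" unfolding e_def using Er by simp
    have "C + e < E powr (1/r)" unfolding e_def using Er by (simp add: field_simps)
    then have "(C + e) powr r < (E powr (1/r)) powr r"
      using C0 e r by (intro powr_less_mono2) auto
    also have "\<dots> = E" using E0 r by (simp add: powr_powr)
    finally show False using key[OF e] by simp
  qed
qed

lemma quad_le: "(y::real) - 2 * y\<^sup>2 \<le> 1/8"
proof -
  have "0 \<le> 2 * (y - 1/4)\<^sup>2" by simp
  then show ?thesis by (simp add: power2_eq_square algebra_simps)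
qed

lemma comp_le_maxnorm: "\<bar>x $ i\<bar> \<le> maxnorm x"
  unfolding maxnorm_def by (rule Max_ge) auto

lemma maxnorm_nonneg: "maxnorm x \<ge> 0"
  using comp_le_maxnorm[of x] by (meson abs_ge_zero order_trans)

lemma mds_facts:
  assumes "martingale_difference_seq M F X"
  shows "subalgebra M (F j)" "filtration (space M) F"
    "j \<ge> 1 \<Longrightarrow> (\<lambda>\<omega>. X j \<omega> $ i) \<in> borel_measurable (F j)"
    "j \<ge> 1 \<Longrightarrow> integrable M (\<lambda>\<omega>. X j \<omega> $ i)"
    "j \<ge> 1 \<Longrightarrow> AE \<omega> in M. real_cond_exp M (F (j - 1)) (\<lambda>\<omega>. X j \<omega> $ i) \<omega> = 0"
  using assms unfolding martingale_difference_seq_def by auto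

lemma mds_meas_F:
  assumes mds: "martingale_difference_seq M F X" and "1 \<le> j" "j \<le> n"
  shows "(\<lambda>\<omega>. X j \<omega> $ i) \<in> borel_measurable (F n)"
proof -
  have sub: "subalgebra (F n) (F j)"
    unfolding subalgebra_def
    using mds_facts(1)[OF mds, of n] mds_facts(1)[OF mds, of j]
      filtration.sets_F_mono[OF mds_facts(2)[OF mds], of j n] assms(3)
    by (auto simp: subalgebra_def)
  show ?thesis by (rule measurable_from_subalg[OF sub mds_facts(3)[OF mds assms(2)]])
qed

lemma mds_meas_M:
  assumes mds: "martingale_difference_seq M F X" and "1 \<le> j"
  shows "(\<lambda>\<omega>. X j \<omega> $ i) \<in> borel_measurable M"
  by (rule measurable_from_subalg[OF mds_facts(1)[OF mds] mds_facts(3)[OF mds assms(2)]])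

lemma supermart:
  assumes P: "prob_space M" and mds: "martingale_difference_seq M F X"
    and bdd: "AE \<omega> in M. \<forall>j\<ge>1. maxnorm (X j \<omega>) \<le> \<kappa>"
    and l: "0 \<le> l" "l * \<kappa> \<le> 1/2" and s: "\<bar>s\<bar> = 1"
  shows "integral\<^sup>L M (\<lambda>\<omega>. exp (\<Sum>j=1..n. s * l * X j \<omega> $ i - 2 * (s * l * X j \<omega> $ i)\<^sup>2)) \<le> 1"
proof -
  interpret prob_space M by (rule P)
  define g where "g j \<omega> = s * l * X j \<omega> $ i - 2 * (s * l * X j \<omega> $ i)\<^sup>2" for j \<omega>
  define G where "G n \<omega> = exp (\<Sum>j=1..n. g j \<omega>)" for n \<omega>
  have gF: "g j \<in> borel_measurable (F n)" if "1 \<le> j" "j \<le> n" for j n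
    unfolding g_def using mds_meas_F[OF mds that, of i] by measurable
  have GF: "G n \<in> borel_measurable (F n)" for n
  proof -
    have "(\<lambda>\<omega>. \<Sum>j=1..n. g j \<omega>) \<in> borel_measurable (F n)"
      using gF by (intro borel_measurable_sum) auto
    then show ?thesis unfolding G_def by (rule measurable_compose[OF _ borel_measurable_exp])
  qed
  have GM: "G n \<in> borel_measurable M" for n
    by (rule measurable_from_subalg[OF mds_facts(1)[OF mds] GF])
  have Gpos: "G n \<omega> > 0" for n \<omega> unfolding G_def by simp
  have Gle: "G n \<omega> \<le> exp (real n / 8)" for n \<omega>
  proof -
    have "(\<Sum>j=1..n. g j \<omega>) \<le> (\<Sum>j=1..n. 1/8)" unfolding g_def by (intro sum_mono quad_le)
    then show ?thesis unfolding G_def by simp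
  qed
  have intG: "integrable M (G n)" for n
  proof (rule integrable_const_bound[where B="exp (real n / 8)"])
    show "AE x in M. norm (G n x) \<le> exp (real n / 8)"
      using Gpos Gle by (intro AE_I2) (simp add: abs_of_pos)
  qed (rule GM)
  have ybd: "AE \<omega> in M. \<bar>s * l * X j \<omega> $ i\<bar> \<le> 1/2" if "j \<ge> 1" for j
    using bdd
  proof eventually_elim
    case (elim \<omega>)
    then have "\<bar>X j \<omega> $ i\<bar> \<le> \<kappa>" using comp_le_maxnorm[of "X j \<omega>" i] that by force
    then have "l * \<bar>X j \<omega> $ i\<bar> \<le> l * \<kappa>" using l by (intro mult_left_mono) auto
    then show ?case using s l by (simp add: abs_mult)
  qed
  have "integral\<^sup>L M (G n) \<le> 1" for n
  proof (induction n)
    case 0 then show ?case unfolding G_def by (simp add: prob_space)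
  next
    case (Suc n)
    have XF: "(\<lambda>\<omega>. X (Suc n) \<omega> $ i) \<in> borel_measurable M" by (rule mds_meas_M[OF mds]) simp
    have intX: "integrable M (\<lambda>\<omega>. X (Suc n) \<omega> $ i)" by (rule mds_facts(4)[OF mds]) simp
    have intGX: "integrable M (\<lambda>\<omega>. G n \<omega> * X (Suc n) \<omega> $ i)"
    proof (rule Bochner_Integration.integrable_bound[OF integrable_mult_right[OF intX, of "exp (real n / 8)"]])
      show "(\<lambda>\<omega>. G n \<omega> * X (Suc n) \<omega> $ i) \<in> borel_measurable M" using GM XF by measurable
      show "AE \<omega> in M. norm (G n \<omega> * X (Suc n) \<omega> $ i) \<le> norm (exp (real n / 8) * X (Suc n) \<omega> $ i)"
        using Gpos Gle by (intro AE_I2) (simp add: abs_mult abs_of_pos mult_right_mono)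
    qed
    interpret sfs: sigma_finite_subalgebra M "F n"
      by (rule finite_measure_subalgebra_is_sigma_finite)
         (auto intro!: finite_measure_subalgebra.intro finite_measure_subalgebra_axioms.intro
               mds_facts(1)[OF mds] finite_measure_axioms)
    have CM: "real_cond_exp M (F n) (\<lambda>\<omega>. X (Suc n) \<omega> $ i) \<in> borel_measurable M"
      by (rule borel_measurable_cond_exp2)
    have GCM: "(\<lambda>\<omega>. G n \<omega> * real_cond_exp M (F n) (\<lambda>\<omega>. X (Suc n) \<omega> $ i) \<omega>) \<in> borel_measurable M"
      using GM CM by measurable
    have "integral\<^sup>L M (\<lambda>\<omega>. G n \<omega> * X (Suc n) \<omega> $ i)
        = integral\<^sup>L M (\<lambda>\<omega>. G n \<omega> * real_cond_exp M (F n) (\<lambda>\<omega>. X (Suc n) \<omega> $ i) \<omega>)"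
      by (rule sfs.real_cond_exp_intg(2)[OF intGX GF XF, symmetric])
    also have "\<dots> = integral\<^sup>L M (\<lambda>\<omega>. 0)"
      using mds_facts(5)[OF mds, of "Suc n" i] GCM by (intro integral_cong_AE) auto
    finally have zero: "integral\<^sup>L M (\<lambda>\<omega>. G n \<omega> * X (Suc n) \<omega> $ i) = 0" by simp
    have "integral\<^sup>L M (G (Suc n)) \<le> integral\<^sup>L M (\<lambda>\<omega>. G n \<omega> + s * l * (G n \<omega> * X (Suc n) \<omega> $ i))"
    proof (rule integral_mono_AE[OF intG])
      show "integrable M (\<lambda>\<omega>. G n \<omega> + s * l * (G n \<omega> * X (Suc n) \<omega> $ i))"
        using intG intGX by auto
      show "AE \<omega> in M. G (Suc n) \<omega> \<le> G n \<omega> + s * l * (G n \<omega> * X (Suc n) \<omega> $ i)"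
      proof -
       have "AE \<omega> in M. \<bar>s * l * X (Suc n) \<omega> $ i\<bar> \<le> 1/2" using ybd[of "Suc n"] by simp
       then show ?thesis
       proof eventually_elim
        case (elim \<omega>)
        have "G (Suc n) \<omega> = G n \<omega> * exp (g (Suc n) \<omega>)"
          unfolding G_def by (simp add: exp_add)
        also have "\<dots> \<le> G n \<omega> * (1 + s * l * X (Suc n) \<omega> $ i)"
          unfolding g_def using exp_quad_le[OF elim] Gpos[of n \<omega>] by (intro mult_left_mono) auto
        finally show ?case by (simp add: algebra_simps)
       qed
      qed
    qed
    also have "\<dots> = integral\<^sup>L M (G n)"
      using intG intGX zero by simp
    finally show ?case using Suc by simp
  qed
  then show ?thesis unfolding G_def g_def .
qed

lemma dyadic:
  fixes c x :: real
  assumes "c \<le> x" "x < c * 2 ^ n"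
  shows "\<exists>m<n. c * 2 ^ m \<le> x \<and> x < c * 2 ^ Suc m"
  using assms
proof (induction n)
  case 0 then show ?case by simp
next
  case (Suc n)
  show ?case
  proof (cases "x < c * 2 ^ n")
    case True
    then obtain m where "m < n" "c * 2 ^ m \<le> x \<and> x < c * 2 ^ Suc m" using Suc by auto
    then show ?thesis by (intro exI[of _ m]) auto
  next
    case False
    then show ?thesis using Suc.prems by (intro exI[of _ n]) auto
  qed
qed

lemma pointwise:
  fixes x Q \<kappa> b p :: real and T :: nat and Z :: "nat \<Rightarrow> real"
  assumes k: "\<kappa> > 0" and b: "b \<ge> 1" and p: "p > 0" and x: "0 \<le> x" "x \<le> T * \<kappa>" and Q: "Q \<ge> 0"
    and Z0: "\<And>m. Z m \<ge> 0"
    and Zbd: "\<And>m. Z m \<ge> exp ((1 / (2 * \<kappa> * 2 ^ m)) * x - 2 * (1 / (2 * \<kappa> * 2 ^ m))\<^sup>2 * Q)"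
  shows "x powr p \<le> (2 * \<kappa> * b) powr p + (16 * b * Q) powr (p / 2)
            + (T * \<kappa>) powr p * exp (- b / 2) * (\<Sum>m<T. Z m)"
proof -
  have t1: "(2 * \<kappa> * b) powr p \<ge> 0" "(16 * b * Q) powr (p / 2) \<ge> 0"
    "(T * \<kappa>) powr p * exp (- b / 2) * (\<Sum>m<T. Z m) \<ge> 0"
    using Z0 by (auto intro!: sum_nonneg mult_nonneg_nonneg)
  show ?thesis
  proof (cases "x < 2 * \<kappa> * b")
    case True
    then have "x powr p \<le> (2 * \<kappa> * b) powr p" using x p by (intro powr_mono2) auto
    then show ?thesis using t1 by linarith
  next
    case c1: False
    show ?thesis
    proof (cases "x\<^sup>2 < 16 * b * Q")
      case True
      have "x powr p = (x powr 2) powr (p / 2)" by (simp add: powr_powr)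
      also have "\<dots> = (x\<^sup>2) powr (p / 2)" using x by simp
      also have "\<dots> \<le> (16 * b * Q) powr (p / 2)" using True p by (intro powr_mono2) auto
      finally show ?thesis using t1 by linarith
    next
      case c2: False
      define c where "c = 2 * \<kappa> * b"
      have cpos: "c > 0" unfolding c_def using k b by simp
      have "real T < 2 ^ T" by (metis of_nat_less_two_power)
      then have "T * \<kappa> < 2 ^ T * \<kappa>" using k by simp
      also have "\<dots> \<le> c * 2 ^ T" unfolding c_def using k b by simp
      finally have "x < c * 2 ^ T" using x by simp
      then obtain m where m: "m < T" "c * 2 ^ m \<le> x" "x < c * 2 ^ Suc m"
        using dyadic[of c x T] c1 unfolding c_def by auto
      define l where "l = 1 / (2 * \<kappa> * 2 ^ m)"
      have lpos: "l > 0" unfolding l_def using k by simp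
      have xpos: "x > 0" using m(2) cpos by (smt (verit) zero_less_power mult_pos_pos)
      have lx: "l * x \<ge> b"
      proof -
        have "b = l * c * 2 ^ m" unfolding l_def c_def using k by simp
        also have "\<dots> \<le> l * x" using m(2) lpos by (simp add: mult.assoc)
        finally show ?thesis .
      qed
      have lx2: "l * x < 2 * b"
      proof -
        have "l * x < l * (c * 2 ^ Suc m)" using m(3) lpos by simp
        also have "\<dots> = 2 * b" unfolding l_def c_def using k by simp
        finally show ?thesis .
      qed
      have "2 * l\<^sup>2 * Q \<le> b / 2"
      proof -
        have "(l * x)\<^sup>2 \<le> (2 * b)\<^sup>2" using lx2 lpos xpos by (intro power_mono) auto
        then have "l\<^sup>2 * x\<^sup>2 \<le> 4 * b\<^sup>2" by (simp add: power_mult_distrib)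
        moreover have "16 * b * Q \<le> x\<^sup>2" using c2 by simp
        ultimately have "l\<^sup>2 * (16 * b * Q) \<le> 4 * b\<^sup>2"
          by (meson order_trans mult_left_mono zero_le_power2)
        then show ?thesis using b by (simp add: power2_eq_square field_simps)
      qed
      then have "b / 2 \<le> l * x - 2 * l\<^sup>2 * Q" using lx by simp
      then have "exp (b / 2) \<le> Z m" using Zbd[of m] unfolding l_def by (meson exp_le_cancel_iff order_trans)
      also have "\<dots> \<le> (\<Sum>m<T. Z m)" using m(1) Z0 by (intro member_le_sum) auto
      finally have eZ: "1 \<le> exp (- b / 2) * (\<Sum>m<T. Z m)"
        by (simp add: exp_minus field_simps)
      have "x powr p \<le> (T * \<kappa>) powr p" using x p by (intro powr_mono2) auto
      also have "\<dots> \<le> (T * \<kappa>) powr p * (exp (- b / 2) * (\<Sum>m<T. Z m))"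
        using eZ by (intro mult_le_cancel_left1[THEN iffD2]) auto
      finally have "x powr p \<le> (T * \<kappa>) powr p * exp (- b / 2) * (\<Sum>m<T. Z m)" by (simp add: mult.assoc)
      then show ?thesis using t1 by linarith
    qed
  qed
qed

lemma maxnorm_le: "(\<And>i. \<bar>x $ i\<bar> \<le> B) \<Longrightarrow> maxnorm x \<le> B"
  unfolding maxnorm_def by (rule Max.boundedI) auto

lemma maxnorm_attained: "\<exists>i. maxnorm x = \<bar>x $ i\<bar>"
proof -
  have "maxnorm x \<in> range (\<lambda>i. \<bar>x $ i\<bar>)" unfolding maxnorm_def by (rule Max_in) auto
  then show ?thesis by auto
qed

lemma maxnorm_meas:
  assumes "\<And>i. (\<lambda>\<omega>. f \<omega> $ i) \<in> borel_measurable M"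
  shows "(\<lambda>\<omega>. maxnorm (f \<omega>)) \<in> borel_measurable M"
  unfolding maxnorm_def using assms by (intro borel_measurable_Max) auto

lemma exp_term_int:
  fixes n :: nat and s l :: real
  assumes P: "prob_space M" and Xm: "\<And>j. 1 \<le> j \<Longrightarrow> (\<lambda>\<omega>. X j \<omega> $ i) \<in> borel_measurable M"
  shows "integrable M (\<lambda>\<omega>. exp (\<Sum>j=1..n. s * l * X j \<omega> $ i - 2 * (s * l * X j \<omega> $ i)\<^sup>2))"
proof -
  interpret prob_space M by (rule P)
  have m: "(\<lambda>\<omega>. \<Sum>j=1..n. s * l * X j \<omega> $ i - 2 * (s * l * X j \<omega> $ i)\<^sup>2) \<in> borel_measurable M"
    using Xm by (intro borel_measurable_sum) auto
  show ?thesis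
  proof (rule integrable_const_bound[where B="exp (real n / 8)"])
    show "AE x in M. norm (exp (\<Sum>j=1..n. s * l * X j x $ i - 2 * (s * l * X j x $ i)\<^sup>2)) \<le> exp (real n / 8)"
    proof (intro AE_I2)
      fix x
      have "(\<Sum>j=1..n. s * l * X j x $ i - 2 * (s * l * X j x $ i)\<^sup>2) \<le> (\<Sum>j=1..n. 1/8)"
        by (intro sum_mono quad_le)
      then show "norm (exp (\<Sum>j=1..n. s * l * X j x $ i - 2 * (s * l * X j x $ i)\<^sup>2)) \<le> exp (real n / 8)"
        by simp
    qed
    show "(\<lambda>\<omega>. exp (\<Sum>j=1..n. s * l * X j \<omega> $ i - 2 * (s * l * X j \<omega> $ i)\<^sup>2)) \<in> borel_measurable M"
      using m by (rule measurable_compose[OF _ borel_measurable_exp])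
  qed
qed

lemma sum_quad:
  fixes s l :: real assumes "s\<^sup>2 = 1"
  shows "(\<Sum>j\<in>J. s * l * a j - 2 * (s * l * a j)\<^sup>2) = s * l * (\<Sum>j\<in>J. a j) - 2 * l\<^sup>2 * (\<Sum>j\<in>J. (a j)\<^sup>2)"
  using assms by (simp add: sum_subtractf sum_distrib_left power_mult_distrib mult.assoc)

lemma sq_powr_half: "(x::real) \<ge> 0 \<Longrightarrow> (x\<^sup>2) powr (p / 2) = x powr p"
proof -
  assume "x \<ge> 0"
  then have "x\<^sup>2 = x powr 2" by simp
  then show ?thesis by (simp add: powr_powr)
qed

lemma main_pos:
  fixes M :: "'a measure" and F :: "nat \<Rightarrow> 'a measure"
    and X :: "nat \<Rightarrow> 'a \<Rightarrow> real ^ 'd"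
    and T :: nat and p \<kappa> :: real
  assumes P: "prob_space M"
    and T2: "T \<ge> 2" and p2: "p \<ge> 2"
    and mds: "martingale_difference_seq M F X"
    and bdd: "AE \<omega> in M. \<forall>j\<ge>1. maxnorm (X j \<omega>) \<le> \<kappa>"
    and kpos: "\<kappa> > 0"
  shows "(integral\<^sup>L M (\<lambda>\<omega>. maxnorm (\<Sum>j=1..T. X j \<omega>) powr p)) powr (1 / p)
         \<le> 4 * p * ln (2 * real CARD('d) * real T ^ 2) *
            (\<kappa> + sqrt (\<Sum>j=1..T. (integral\<^sup>L M (\<lambda>\<omega>. maxnorm (X j \<omega>) powr p)) powr (2 / p)))"
proof -
  interpret prob_space M by (rule P)
  have Xm: "\<And>j i. 1 \<le> j \<Longrightarrow> (\<lambda>\<omega>. X j \<omega> $ i) \<in> borel_measurable M"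
    by (rule mds_meas_M[OF mds])
  define d where "d = real CARD('d)"
  have d1: "d \<ge> 1" unfolding d_def by (metis One_nat_def Suc_leI of_nat_1 of_nat_le_iff zero_less_card_finite)
  have T2r: "real T \<ge> 2" using T2 by simp
  define u where "u = ln (2 * d * T)"
  define L where "L = ln (2 * d * real T ^ 2)"
  have LuT: "L = u + ln T" unfolding L_def u_def using d1 T2r by (simp add: ln_mult power2_eq_square mult.assoc)
  have lnT: "ln T \<ge> 0" using T2r by simp
  have u1: "u \<ge> 1"
  proof -
    have "4 \<le> 2 * d * T" using d1 T2r mult_mono[of 1 d 2 "real T"] by simp
    then have "ln 4 \<le> u" unfolding u_def by (intro ln_mono) auto
    moreover have "ln (4::real) = 2 * ln 2" using ln_realpow[of 2 2] by simp
    ultimately show ?thesis using ln2_ge_two_thirds by linarith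
  qed
  define b where "b = (p + 1) * u + 2 * p * ln T"
  have b1: "b \<ge> 1"
  proof -
    have "(p + 1) * u \<ge> 1 * 1" using u1 p2 by (intro mult_mono) auto
    moreover have "2 * p * ln T \<ge> 0" using p2 lnT by simp
    ultimately show ?thesis unfolding b_def by linarith
  qed
  define SS where "SS \<omega> = (\<Sum>j=1..T. X j \<omega>)" for \<omega>
  define xx where "xx \<omega> = maxnorm (SS \<omega>)" for \<omega>
  define Q where "Q \<omega> = (\<Sum>j=1..T. (maxnorm (X j \<omega>))\<^sup>2)" for \<omega>
  define lam where "lam m = 1 / (2 * \<kappa> * 2 ^ m)" for m :: nat
  define trm where "trm m i s \<omega> = exp (\<Sum>j=1..T. s * lam m * X j \<omega> $ i - 2 * (s * lam m * X j \<omega> $ i)\<^sup>2)"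
    for m i s \<omega>
  define Z where "Z m \<omega> = (\<Sum>i\<in>UNIV. \<Sum>s\<in>{-1,1::real}. trm m i s \<omega>)" for m \<omega>
  define A where "A = sqrt (\<Sum>j=1..T. (integral\<^sup>L M (\<lambda>\<omega>. maxnorm (X j \<omega>) powr p)) powr (2 / p))"
  have A0: "A \<ge> 0" unfolding A_def by (simp add: sum_nonneg)
  have SSc: "SS \<omega> $ i = (\<Sum>j=1..T. X j \<omega> $ i)" for \<omega> i unfolding SS_def by simp
  have SSm: "(\<lambda>\<omega>. SS \<omega> $ i) \<in> borel_measurable M" for i
    unfolding SSc using Xm by (intro borel_measurable_sum) auto
  have xxm: "xx \<in> borel_measurable M" unfolding xx_def by (rule maxnorm_meas[OF SSm])
  have Qm: "Q \<in> borel_measurable M" unfolding Q_def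
    using maxnorm_meas[OF Xm] by (intro borel_measurable_sum borel_measurable_power) auto
  have trm_int: "integrable M (trm m i s)" for m i s
    unfolding trm_def by (rule exp_term_int[OF P Xm])
  have trm0: "trm m i s \<omega> \<ge> 0" for m i s \<omega> unfolding trm_def by simp
  have Z0: "Z m \<omega> \<ge> 0" for m \<omega> unfolding Z_def using trm0 by (intro sum_nonneg) auto
  have Zint: "integrable M (Z m)" for m unfolding Z_def using trm_int by (intro Bochner_Integration.integrable_sum) auto
  have Q0: "Q \<omega> \<ge> 0" for \<omega> unfolding Q_def by (simp add: sum_nonneg)
  have xx0: "xx \<omega> \<ge> 0" for \<omega> unfolding xx_def by (rule maxnorm_nonneg)
  have AEb: "AE \<omega> in M. xx \<omega> \<le> T * \<kappa> \<and> Q \<omega> \<le> T * \<kappa>\<^sup>2 \<and>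
      xx \<omega> powr p \<le> (2 * \<kappa> * b) powr p + (16 * b * Q \<omega>) powr (p / 2)
            + (T * \<kappa>) powr p * exp (- b / 2) * (\<Sum>m<T. Z m \<omega>)"
    using bdd
  proof eventually_elim
    case (elim \<omega>)
    have Xb: "\<bar>X j \<omega> $ i\<bar> \<le> \<kappa>" if "j \<in> {1..T}" for j i
      using elim that comp_le_maxnorm[of "X j \<omega>" i] by force
    have xT: "xx \<omega> \<le> T * \<kappa>"
    proof -
      have "\<bar>SS \<omega> $ i\<bar> \<le> T * \<kappa>" for i
      proof -
        have "\<bar>SS \<omega> $ i\<bar> \<le> (\<Sum>j=1..T. \<bar>X j \<omega> $ i\<bar>)" unfolding SSc by (rule sum_abs)
        also have "\<dots> \<le> (\<Sum>j=1..T. \<kappa>)" using Xb by (intro sum_mono) auto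
        finally show ?thesis by simp
      qed
      then show ?thesis unfolding xx_def by (rule maxnorm_le)
    qed
    have QT: "Q \<omega> \<le> T * \<kappa>\<^sup>2"
    proof -
      have "Q \<omega> \<le> (\<Sum>j=1..T. \<kappa>\<^sup>2)" unfolding Q_def
        using elim maxnorm_nonneg by (intro sum_mono power_mono) auto
      then show ?thesis by simp
    qed
    have Zbd: "Z m \<omega> \<ge> exp ((1 / (2 * \<kappa> * 2 ^ m)) * xx \<omega> - 2 * (1 / (2 * \<kappa> * 2 ^ m))\<^sup>2 * Q \<omega>)" for m
    proof -
      obtain i where i: "xx \<omega> = \<bar>SS \<omega> $ i\<bar>" unfolding xx_def using maxnorm_attained by blast
      define s where "s = (if SS \<omega> $ i \<ge> 0 then 1 else -1::real)"
      have s2: "s\<^sup>2 = 1" unfolding s_def by simp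
      have sS: "s * SS \<omega> $ i = xx \<omega>" unfolding s_def i by simp
      have sin: "s \<in> {-1, 1}" unfolding s_def by simp
      have sq: "(\<Sum>j=1..T. (X j \<omega> $ i)\<^sup>2) \<le> Q \<omega>" unfolding Q_def
      proof (intro sum_mono)
        fix j show "(X j \<omega> $ i)\<^sup>2 \<le> (maxnorm (X j \<omega>))\<^sup>2"
          using comp_le_maxnorm[of "X j \<omega>" i] by (metis abs_ge_zero power2_abs power_mono)
      qed
      have "trm m i s \<omega> = exp (s * lam m * SS \<omega> $ i - 2 * (lam m)\<^sup>2 * (\<Sum>j=1..T. (X j \<omega> $ i)\<^sup>2))"
        unfolding trm_def SSc sum_quad[OF s2] ..
      also have "\<dots> \<ge> exp (lam m * xx \<omega> - 2 * (lam m)\<^sup>2 * Q \<omega>)"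
      proof -
        have "2 * (lam m)\<^sup>2 * (\<Sum>j=1..T. (X j \<omega> $ i)\<^sup>2) \<le> 2 * (lam m)\<^sup>2 * Q \<omega>"
          using sq by (intro mult_left_mono) auto
        moreover have "s * lam m * SS \<omega> $ i = lam m * xx \<omega>" using sS by (simp add: mult.commute mult.left_commute)
        ultimately have "lam m * xx \<omega> - 2 * (lam m)\<^sup>2 * Q \<omega> \<le> s * lam m * SS \<omega> $ i - 2 * (lam m)\<^sup>2 * (\<Sum>j=1..T. (X j \<omega> $ i)\<^sup>2)"
          by linarith
        then show ?thesis by simp
      qed
      finally have t: "exp (lam m * xx \<omega> - 2 * (lam m)\<^sup>2 * Q \<omega>) \<le> trm m i s \<omega>" .
      also have "\<dots> \<le> (\<Sum>s\<in>{-1,1::real}. trm m i s \<omega>)"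
        using sin trm0 by (intro member_le_sum) auto
      also have "\<dots> \<le> Z m \<omega>" unfolding Z_def
        using trm0 by (intro member_le_sum sum_nonneg) auto
      finally show ?thesis unfolding lam_def .
    qed
    have "xx \<omega> powr p \<le> (2 * \<kappa> * b) powr p + (16 * b * Q \<omega>) powr (p / 2)
            + (T * \<kappa>) powr p * exp (- b / 2) * (\<Sum>m<T. Z m \<omega>)"
      by (rule pointwise[OF kpos b1 _ xx0 xT Q0 Z0 Zbd]) (use p2 in auto)
    then show ?case using xT QT by simp
  qed
  define c1 where "c1 = (2 * \<kappa> * b) powr p"
  define c2 where "c2 = (16 * b) powr (p / 2)"
  define c3 where "c3 = (T * \<kappa>) powr p * exp (- b / 2)"
  have c3pos: "c3 \<ge> 0" unfolding c3_def by simp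
  have AEb2: "AE \<omega> in M. xx \<omega> powr p \<le> c1 + c2 * Q \<omega> powr (p / 2) + c3 * (\<Sum>m<T. Z m \<omega>)"
    using AEb
  proof eventually_elim
    case (elim \<omega>)
    have "(16 * b * Q \<omega>) powr (p / 2) = c2 * Q \<omega> powr (p / 2)"
      unfolding c2_def using b1 Q0[of \<omega>] by (simp add: powr_mult)
    then show ?case using elim unfolding c1_def c3_def by simp
  qed
  have int_xx: "integrable M (\<lambda>\<omega>. xx \<omega> powr p)"
  proof (rule integrable_const_bound[where B="(T * \<kappa>) powr p"])
    show "AE x in M. norm (xx x powr p) \<le> (T * \<kappa>) powr p"
      using AEb by eventually_elim (use xx0 p2 in \<open>auto intro: powr_mono2\<close>)
    show "(\<lambda>\<omega>. xx \<omega> powr p) \<in> borel_measurable M" using xxm by measurable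
  qed
  have int_Q: "integrable M (\<lambda>\<omega>. Q \<omega> powr (p / 2))"
  proof (rule integrable_const_bound[where B="(T * \<kappa>\<^sup>2) powr (p / 2)"])
    show "AE x in M. norm (Q x powr (p / 2)) \<le> (T * \<kappa>\<^sup>2) powr (p / 2)"
      using AEb by eventually_elim (use Q0 p2 in \<open>auto intro: powr_mono2\<close>)
    show "(\<lambda>\<omega>. Q \<omega> powr (p / 2)) \<in> borel_measurable M" using Qm by measurable
  qed
  have EZ: "integral\<^sup>L M (Z m) \<le> 2 * d" for m
  proof -
    have "integral\<^sup>L M (Z m) = (\<Sum>i\<in>UNIV. \<Sum>s\<in>{-1,1::real}. integral\<^sup>L M (trm m i s))"
      unfolding Z_def using trm_int
      by (subst Bochner_Integration.integral_sum, auto intro!: Bochner_Integration.integrable_sum)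
    also have "\<dots> \<le> (\<Sum>i\<in>(UNIV::'d set). \<Sum>s\<in>{-1,1::real}. 1)"
    proof (intro sum_mono)
      fix i :: 'd and s :: real assume "s \<in> {-1, 1}"
      then have s: "\<bar>s\<bar> = 1" by auto
      have l: "0 \<le> lam m" "lam m * \<kappa> \<le> 1/2" unfolding lam_def using kpos
        by (auto simp: field_simps)
      show "integral\<^sup>L M (trm m i s) \<le> 1"
        unfolding trm_def by (rule supermart[OF P mds bdd l s])
    qed
    also have "\<dots> = 2 * d" unfolding d_def by simp
    finally show ?thesis .
  qed
  have EQ: "integral\<^sup>L M (\<lambda>\<omega>. Q \<omega> powr (p / 2)) \<le> A powr p"
  proof -
    have intY: "integrable M (\<lambda>\<omega>. ((maxnorm (X j \<omega>))\<^sup>2) powr (p / 2))" if "j \<in> {1..T}" for j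
    proof (rule integrable_const_bound[where B="(\<kappa>\<^sup>2) powr (p / 2)"])
      show "AE x in M. norm (((maxnorm (X j x))\<^sup>2) powr (p / 2)) \<le> (\<kappa>\<^sup>2) powr (p / 2)"
        using bdd
      proof eventually_elim
        case (elim x)
        then have "maxnorm (X j x) \<le> \<kappa>" using that by auto
        then have "(maxnorm (X j x))\<^sup>2 \<le> \<kappa>\<^sup>2" using maxnorm_nonneg by (intro power_mono) auto
        then show ?case using p2 by (auto intro: powr_mono2)
      qed
      show "(\<lambda>\<omega>. ((maxnorm (X j \<omega>))\<^sup>2) powr (p / 2)) \<in> borel_measurable M"
      proof -
        have "(\<lambda>\<omega>. maxnorm (X j \<omega>)) \<in> borel_measurable M"
          using that by (intro maxnorm_meas Xm) auto
        then show ?thesis by measurable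
      qed
    qed
    have "integral\<^sup>L M (\<lambda>\<omega>. Q \<omega> powr (p / 2))
       \<le> (\<Sum>j\<in>{1..T}. (integral\<^sup>L M (\<lambda>\<omega>. ((maxnorm (X j \<omega>))\<^sup>2) powr (p / 2))) powr (1 / (p / 2))) powr (p / 2)"
      unfolding Q_def
      by (rule minkowski_sum[where J="{1..T}"]) (use p2 intY int_Q in \<open>auto simp: Q_def\<close>)
    also have "\<dots> = (A\<^sup>2) powr (p / 2)"
    proof -
      have "(\<Sum>j\<in>{1..T}. (integral\<^sup>L M (\<lambda>\<omega>. ((maxnorm (X j \<omega>))\<^sup>2) powr (p / 2))) powr (1 / (p / 2)))
          = (\<Sum>j=1..T. (integral\<^sup>L M (\<lambda>\<omega>. maxnorm (X j \<omega>) powr p)) powr (2 / p))"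
        by (simp add: sq_powr_half maxnorm_nonneg)
      also have "\<dots> = A\<^sup>2" unfolding A_def by (simp add: sum_nonneg)
      finally show ?thesis by simp
    qed
    also have "\<dots> = A powr p" using A0 by (rule sq_powr_half)
    finally show ?thesis .
  qed
  have E1: "integral\<^sup>L M (\<lambda>\<omega>. xx \<omega> powr p)
      \<le> integral\<^sup>L M (\<lambda>\<omega>. c1 + c2 * Q \<omega> powr (p / 2) + c3 * (\<Sum>m<T. Z m \<omega>))"
    using int_xx int_Q Zint AEb2
    by (intro integral_mono_AE) (auto intro!: Bochner_Integration.integrable_sum)
  also have "\<dots> = c1 + c2 * integral\<^sup>L M (\<lambda>\<omega>. Q \<omega> powr (p / 2)) + c3 * (\<Sum>m<T. integral\<^sup>L M (Z m))"
    using int_Q Zint by (simp add: Bochner_Integration.integral_sum Bochner_Integration.integrable_sum prob_space)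
  also have "\<dots> \<le> c1 + c2 * A powr p + c3 * (T * (2 * d))"
  proof -
    have "c2 * integral\<^sup>L M (\<lambda>\<omega>. Q \<omega> powr (p / 2)) \<le> c2 * A powr p"
      using EQ unfolding c2_def by (intro mult_left_mono) auto
    moreover have "(\<Sum>m<T. integral\<^sup>L M (Z m)) \<le> (\<Sum>m<T. 2 * d)" using EZ by (intro sum_mono)
    then have "c3 * (\<Sum>m<T. integral\<^sup>L M (Z m)) \<le> c3 * (T * (2 * d))"
      using c3pos by (intro mult_left_mono) auto
    ultimately show ?thesis by linarith
  qed
  finally have E2: "integral\<^sup>L M (\<lambda>\<omega>. xx \<omega> powr p) \<le> c1 + c2 * A powr p + c3 * (T * (2 * d))" .
  have c3b: "c3 * (T * (2 * d)) \<le> \<kappa> powr p"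
  proof -
    have Tp: "real T powr p = exp (p * ln T)" using T2r by (simp add: powr_def)
    have eu: "T * (2 * d) = exp u" unfolding u_def using T2r d1 by simp
    have "c3 * (T * (2 * d)) = \<kappa> powr p * (exp (p * ln T) * exp (- b / 2) * exp u)"
      unfolding c3_def eu using T2r kpos by (simp add: powr_mult Tp)
    also have "exp (p * ln T) * exp (- b / 2) * exp u = exp (p * ln T + (- b / 2) + u)"
      by (simp only: exp_add)
    also have "p * ln T + (- b / 2) + u = (1 - p) * u / 2" unfolding b_def by (simp add: field_simps)
    also have "exp ((1 - p) * u / 2) \<le> 1" using p2 u1 by (simp add: mult_nonneg_nonneg mult_nonpos_nonneg)
    then have "\<kappa> powr p * exp ((1 - p) * u / 2) \<le> \<kappa> powr p" by (simp add: mult_left_le)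
    finally show ?thesis .
  qed
  have c2A: "c2 * A powr p = (4 * sqrt b * A) powr p"
  proof -
    have "(4 * sqrt b)\<^sup>2 = 16 * b" using b1 by (simp add: power_mult_distrib)
    then have "c2 = (4 * sqrt b) powr p" unfolding c2_def using b1 sq_powr_half[of "4 * sqrt b" p] by simp
    then show ?thesis using A0 b1 by (simp add: powr_mult)
  qed
  define \<alpha> where "\<alpha> = 2 * \<kappa> * b"
  define \<beta> where "\<beta> = 4 * sqrt b * A"
  have al0: "\<alpha> \<ge> 0" unfolding \<alpha>_def using kpos b1 by simp
  have be0: "\<beta> \<ge> 0" unfolding \<beta>_def using A0 b1 by simp
  have E3: "integral\<^sup>L M (\<lambda>\<omega>. xx \<omega> powr p) \<le> (\<alpha> + \<beta> + \<kappa>) powr p"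
  proof -
    have "integral\<^sup>L M (\<lambda>\<omega>. xx \<omega> powr p) \<le> \<alpha> powr p + \<beta> powr p + \<kappa> powr p"
      using E2 c3b c2A unfolding c1_def \<alpha>_def \<beta>_def by linarith
    also have "\<dots> \<le> (\<alpha> + \<beta>) powr p + \<kappa> powr p" using powr_add_le[OF al0 be0, of p] p2 by simp
    also have "\<dots> \<le> (\<alpha> + \<beta> + \<kappa>) powr p" using powr_add_le[of "\<alpha> + \<beta>" \<kappa> p] al0 be0 kpos p2 by simp
    finally show ?thesis .
  qed
  have E0: "integral\<^sup>L M (\<lambda>\<omega>. xx \<omega> powr p) \<ge> 0" by (intro integral_nonneg_AE) auto
  have E4: "(integral\<^sup>L M (\<lambda>\<omega>. xx \<omega> powr p)) powr (1 / p) \<le> \<alpha> + \<beta> + \<kappa>"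
  proof -
    have "(integral\<^sup>L M (\<lambda>\<omega>. xx \<omega> powr p)) powr (1 / p) \<le> ((\<alpha> + \<beta> + \<kappa>) powr p) powr (1 / p)"
      using E3 E0 p2 by (intro powr_mono2) auto
    also have "\<dots> = \<alpha> + \<beta> + \<kappa>" using al0 be0 kpos p2 by (simp add: powr_powr)
    finally show ?thesis .
  qed
  have L1: "L \<ge> 1" using LuT u1 lnT by simp
  have pL2: "p * L \<ge> 2" using p2 L1 mult_mono[of 2 p 1 L] by simp
  have ka: "\<alpha> + \<kappa> \<le> 4 * p * L * \<kappa>"
  proof -
    have "1 \<le> (2 * p - 2) * u" using p2 u1 mult_mono[of 1 "2 * p - 2" 1 u] by simp
    then have "2 * b + 1 \<le> 4 * p * L" unfolding b_def LuT by (simp add: algebra_simps)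
    then have "(2 * b + 1) * \<kappa> \<le> (4 * p * L) * \<kappa>" using kpos by (intro mult_right_mono) auto
    then show ?thesis unfolding \<alpha>_def by (simp add: algebra_simps)
  qed
  have kb: "\<beta> \<le> 4 * p * L * A"
  proof -
    have "(p + 1) * u \<le> 2 * p * u" using p2 u1 by (intro mult_right_mono) auto
    then have "b \<le> 2 * p * L" unfolding b_def LuT by (simp add: algebra_simps)
    also have "\<dots> \<le> (p * L) * (p * L)" using mult_right_mono[of 2 "p*L" "p*L"] pL2 by (simp add: mult.assoc)
    finally have "sqrt b \<le> p * L" using pL2 by (simp add: real_sqrt_le_iff power2_eq_square[symmetric] real_le_lsqrt)
    then have "4 * sqrt b * A \<le> 4 * (p * L) * A" using A0 by (intro mult_right_mono) auto
    then show ?thesis unfolding \<beta>_def by (simp add: algebra_simps)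
  qed
  have "(integral\<^sup>L M (\<lambda>\<omega>. maxnorm (\<Sum>j=1..T. X j \<omega>) powr p)) powr (1 / p) \<le> 4 * p * L * (\<kappa> + A)"
    using E4 ka kb unfolding xx_def SS_def by (simp add: algebra_simps)
  then show ?thesis unfolding L_def A_def d_def .
qed

theorem lemmaD9:
  fixes M :: "'a measure" and F :: "nat \<Rightarrow> 'a measure"
    and X :: "nat \<Rightarrow> 'a \<Rightarrow> real ^ 'd"
    and T :: nat and p \<kappa> :: real
  assumes "prob_space M"
    and "T \<ge> 2" and "p \<ge> 2"
    and mds: "martingale_difference_seq M F X"
    and cov: "\<And>j i k. j \<ge> 1 \<Longrightarrow> integrable M (\<lambda>\<omega>. X j \<omega> $ i * X j \<omega> $ k)"
    and bdd: "AE \<omega> in M. \<forall>j\<ge>1. maxnorm (X j \<omega>) \<le> \<kappa>"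
  shows "(integral\<^sup>L M (\<lambda>\<omega>. maxnorm (\<Sum>j=1..T. X j \<omega>) powr p)) powr (1 / p)
         \<le> 4 * p * ln (2 * real CARD('d) * real T ^ 2) *
            (\<kappa> + sqrt (\<Sum>j=1..T. (integral\<^sup>L M (\<lambda>\<omega>. maxnorm (X j \<omega>) powr p)) powr (2 / p)))"
proof (cases "\<kappa> > 0")
  case True
  then show ?thesis by (rule main_pos[OF assms(1-4) bdd])
next
  case False
  interpret prob_space M by (rule assms(1))
  have AE0: "AE \<omega> in M. maxnorm (\<Sum>j=1..T. X j \<omega>) = 0 \<and> \<kappa> \<ge> 0"
    using bdd
  proof eventually_elim
    case (elim \<omega>)
    have "maxnorm (X 1 \<omega>) \<le> \<kappa>" using elim by simp
    then have k0: "\<kappa> \<ge> 0" using maxnorm_nonneg[of "X 1 \<omega>"] by linarith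
    have "\<bar>(\<Sum>j=1..T. X j \<omega>) $ i\<bar> \<le> 0" for i
    proof -
      have "\<bar>(\<Sum>j=1..T. X j \<omega>) $ i\<bar> \<le> (\<Sum>j=1..T. \<bar>X j \<omega> $ i\<bar>)" unfolding sum_component by (rule sum_abs)
      also have "\<dots> \<le> (\<Sum>j=1..T. 0)"
      proof (intro sum_mono)
        fix j assume "j \<in> {1..T}"
        then have "maxnorm (X j \<omega>) \<le> \<kappa>" using elim by simp
        then show "\<bar>X j \<omega> $ i\<bar> \<le> 0" using False comp_le_maxnorm[of "X j \<omega>" i] by linarith
      qed
      finally show ?thesis by simp
    qed
    then have "maxnorm (\<Sum>j=1..T. X j \<omega>) \<le> 0" by (rule maxnorm_le)
    then show ?case using maxnorm_nonneg[of "\<Sum>j=1..T. X j \<omega>"] k0 by linarith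
  qed
  have "AE \<omega> in M. \<kappa> \<ge> 0" using AE0 by eventually_elim simp
  then have k0: "\<kappa> \<ge> 0" by simp
  have Xm: "\<And>j i. 1 \<le> j \<Longrightarrow> (\<lambda>\<omega>. X j \<omega> $ i) \<in> borel_measurable M"
    by (rule mds_meas_M[OF mds])
  have "(\<lambda>\<omega>. maxnorm (\<Sum>j=1..T. X j \<omega>)) \<in> borel_measurable M"
    by (rule maxnorm_meas) (use Xm in \<open>auto intro!: borel_measurable_sum\<close>)
  then have mm: "(\<lambda>\<omega>. maxnorm (\<Sum>j=1..T. X j \<omega>) powr p) \<in> borel_measurable M" by measurable
  have "integral\<^sup>L M (\<lambda>\<omega>. maxnorm (\<Sum>j=1..T. X j \<omega>) powr p) = integral\<^sup>L M (\<lambda>\<omega>. 0)"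
    by (rule integral_cong_AE[OF mm]) (use AE0 in auto)
  then have "(integral\<^sup>L M (\<lambda>\<omega>. maxnorm (\<Sum>j=1..T. X j \<omega>) powr p)) powr (1 / p) = 0" by simp
  moreover have "0 \<le> 4 * p * ln (2 * real CARD('d) * real T ^ 2) *
            (\<kappa> + sqrt (\<Sum>j=1..T. (integral\<^sup>L M (\<lambda>\<omega>. maxnorm (X j \<omega>) powr p)) powr (2 / p)))"
  proof -
    have c1: "real CARD('d) \<ge> 1" by (metis One_nat_def Suc_leI of_nat_1 of_nat_le_iff zero_less_card_finite)
    have t1: "real T ^ 2 \<ge> 1" using assms(2) by simp
    have "1 * 1 \<le> (2 * real CARD('d)) * real T ^ 2" using c1 t1 by (intro mult_mono) linarith+
    then have "1 \<le> 2 * real CARD('d) * real T ^ 2" by simp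
    then have "ln (2 * real CARD('d) * real T ^ 2) \<ge> 0" by simp
    then show ?thesis using assms(3) k0 by (intro mult_nonneg_nonneg add_nonneg_nonneg) (auto simp: sum_nonneg)
  qed
  ultimately show ?thesis by simp
qed

end
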